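(* For $\alpha\in[-1,1]$ let $\rho(\alpha)=\tfrac12(I+\alpha\sigma_z)=\tfrac12\begin{pmatrix}1+\alpha&0\\0&1-\alpha\end{pmatrix}$. Then for all $\alpha,\beta\in[-1,1]$ and $p\ge1$, $$D^p_{z,p}(\rho(\alpha),\rho(\beta))=2^{p-1}|\alpha-\beta|.$$
   Context: Qubit setting: $\mathcal{H}=\mathbb{C}^2$, $\mathcal{H}^*$ is identified with $\mathbb{C}^2$ via the dual basis, and $A^T$ is the usual matrix transpose; operators on $\mathcal{H}\otimes\mathcal{H}^*$ are $4\times4$ matrices in the basis $e_1\otimes e_1^*,e_1\otimes e_2^*,e_2\otimes e_1^*,e_2\otimes e_2^*$. $\sigma_z=\begin{pmatrix}1&0\\0&-1\end{pmatrix}$. The set of couplings of states $\rho,\omega$ is $\mathcal{C}(\rho,\omega)=\{\Pi\in\mathcal{S}(\mathcal{H}\otimes\mathcal{H}^* ):\mathrm{tr}_{\mathcal{H}^*}[\Pi]=\omega,\ \mathrm{tr}_{\mathcal{H}}[\Pi]=\rho^T\}$. For $p\ge1$, $C_{z,p}=|\sigma_z\otimes I^T-I\otimes\sigma_z^T|^p=\mathrm{diag}(0,2^p,2^p,0)$, and $D_{z,p}(\rho,\omega)=\big(\min_{\Pi\in\mathcal{C}(\rho,\omega)}\mathrm{tr}[\Pi C_{z,p}]\big)^{1/p}$. *)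

theory Defs
  imports Complex_Main "HOL-Library.Complex_Order"
begin

text \<open>Matrices are represented as functions nat => nat => complex; only the
entries with indices below the dimension matter. On H (x) H* = C^2 (x) C^2 the
basis vector e_i (x) e_j^* (i,j in {0,1}) has index 2*i+j.\<close>

type_synonym cmat = "nat \<Rightarrow> nat \<Rightarrow> complex"

definition sigma_z :: cmat where
  "sigma_z i j = (if i = j then (if i = 0 then 1 else -1) else 0)"

definition id2 :: cmat where
  "id2 i j = (if i = j then 1 else 0)"

definition transp :: "cmat \<Rightarrow> cmat" where
  "transp A i j = A j i"

definition mtrace :: "nat \<Rightarrow> cmat \<Rightarrow> complex" where
  "mtrace n A = (\<Sum>i<n. A i i)"

definition mmult :: "nat \<Rightarrow> cmat \<Rightarrow> cmat \<Rightarrow> cmat" where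
  "mmult n A B i j = (\<Sum>k<n. A i k * B k j)"

definition is_state :: "nat \<Rightarrow> cmat \<Rightarrow> bool" where
  "is_state n A \<longleftrightarrow>
     (\<forall>i<n. \<forall>j<n. A j i = cnj (A i j)) \<and>
     (\<forall>v :: nat \<Rightarrow> complex. 0 \<le> (\<Sum>i<n. \<Sum>j<n. cnj (v i) * A i j * v j)) \<and>
     mtrace n A = 1"

definition ptrace_dual :: "cmat \<Rightarrow> cmat" where
  "ptrace_dual P i k = (\<Sum>j<2. P (2*i+j) (2*k+j))"

definition ptrace_H :: "cmat \<Rightarrow> cmat" where
  "ptrace_H P j l = (\<Sum>i<2. P (2*i+j) (2*i+l))"

definition couplings :: "cmat \<Rightarrow> cmat \<Rightarrow> cmat set" where
  "couplings \<rho> \<omega> = {P. is_state 4 P \<and>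
      (\<forall>i<2. \<forall>k<2. ptrace_dual P i k = \<omega> i k) \<and>
      (\<forall>j<2. \<forall>l<2. ptrace_H P j l = transp \<rho> j l)}"

text \<open>C_{z,p} = |sigma_z (x) I^T - I (x) sigma_z^T|^p; the operator inside is diagonal
with entry sigma_z(i,i) - sigma_z(j,j) at index 2*i+j, so its p-th absolute power
is diagonal with the p-th powers of the absolute values of these entries.\<close>
definition Czp :: "real \<Rightarrow> cmat" where
  "Czp p a b = (if a = b then
      complex_of_real (cmod (sigma_z (a div 2) (a div 2) * transp id2 (a mod 2) (a mod 2)
                    - id2 (a div 2) (a div 2) * transp sigma_z (a mod 2) (a mod 2)) powr p)
      else 0)"

text \<open>D_{z,p}(rho, omega) = (min over couplings of tr[Pi C_{z,p}])^(1/p).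
The minimum is expressed as an infimum of the (real) values of the trace.\<close>
definition Dzp :: "real \<Rightarrow> cmat \<Rightarrow> cmat \<Rightarrow> real" where
  "Dzp p \<rho> \<omega> = (INF P \<in> couplings \<rho> \<omega>. Re (mtrace 4 (mmult 4 P (Czp p)))) powr (1/p)"

definition rho_a :: "real \<Rightarrow> cmat" where
  "rho_a \<alpha> i j = (1/2) * (id2 i j + complex_of_real \<alpha> * sigma_z i j)"

end

theory Submission
  imports Defs
begin

lemma Czp_vals:
  "Czp p 0 0 = 0" "Czp p 1 1 = of_real (2 powr p)" "Czp p 2 2 = of_real (2 powr p)"
  "Czp p 3 3 = 0" "Czp p (Suc 0) (Suc 0) = of_real (2 powr p)" "a \<noteq> b \<Longrightarrow> Czp p a b = 0"
  by (simp_all add: Czp_def sigma_z_def id2_def transp_def)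

lemma sum4: "(\<Sum>i<(4::nat). f i) = f 0 + f 1 + f 2 + (f 3 :: complex)"
  by (simp add: numeral_eq_Suc lessThan_Suc)

lemma sum2: "(\<Sum>i<(2::nat). f i) = f 0 + (f 1 :: complex)"
  by (simp add: numeral_eq_Suc lessThan_Suc)

lemma trace_C: "mtrace 4 (mmult 4 P (Czp p)) = of_real (2 powr p) * (P 1 1 + P 2 2)"
  unfolding mtrace_def mmult_def sum4 by (simp add: Czp_vals distrib_left)

lemma diag_nonneg:
  assumes "is_state 4 P" "a < 4"
  shows "0 \<le> P a a"
proof -
  let ?v = "\<lambda>i. if i = a then 1 else (0::complex)"
  have "\<forall>v::nat\<Rightarrow>complex. 0 \<le> (\<Sum>i<4. \<Sum>j<4. cnj (v i) * P i j * v j)"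
    using assms(1) unfolding is_state_def by blast
  hence "0 \<le> (\<Sum>i<4. \<Sum>j<4. cnj (?v i) * P i j * ?v j)" by (rule spec)
  also have "\<dots> = P a a"
  proof -
    have "a = 0 \<or> a = 1 \<or> a = 2 \<or> a = 3" using assms(2) by auto
    then show ?thesis by (elim disjE) (simp_all add: sum4)
  qed
  finally show ?thesis .
qed

lemma coup_D:
  assumes "P \<in> couplings \<rho> \<omega>"
  shows "is_state 4 P" "\<forall>i<2. \<forall>k<2. ptrace_dual P i k = \<omega> i k"
    "\<forall>j<2. \<forall>l<2. ptrace_H P j l = transp \<rho> j l"
proof -
  have "is_state 4 P \<and> (\<forall>i<2. \<forall>k<2. ptrace_dual P i k = \<omega> i k) \<and>
    (\<forall>j<2. \<forall>l<2. ptrace_H P j l = transp \<rho> j l)"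
    using assms unfolding couplings_def mem_Collect_eq by assumption
  then show "is_state 4 P" "\<forall>i<2. \<forall>k<2. ptrace_dual P i k = \<omega> i k"
    "\<forall>j<2. \<forall>l<2. ptrace_H P j l = transp \<rho> j l" by blast+
qed
lemma re_eq2:
  assumes e: "a * 2 + c * 2 = 1 + complex_of_real x"
  shows "Re a * 2 + Re c * 2 = 1 + x"
proof -
  have "Re (a * 2 + c * 2) = Re (1 + of_real x)" using e by (rule arg_cong)
  then show ?thesis by simp
qed

lemma abs_bound:
  fixes a b x y z :: real
  shows "x * 2 + y * 2 = 1 + b \<Longrightarrow> x * 2 + z * 2 = 1 + a \<Longrightarrow> y \<ge> 0 \<Longrightarrow> z \<ge> 0
    \<Longrightarrow> \<bar>a - b\<bar> \<le> 2 * (y + z)"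
  by (simp add: abs_if)

lemma powr_half: fixes q :: real shows "2 powr (p - 1) * (2 * q) = 2 powr p * q"
  by (simp add: powr_diff)

lemma lower:
  assumes "P \<in> couplings (rho_a \<alpha>) (rho_a \<beta>)"
  shows "2 powr (p - 1) * \<bar>\<alpha> - \<beta>\<bar> \<le> Re (mtrace 4 (mmult 4 P (Czp p)))"
proof -
  note cd = coup_D[OF assms]
  have d1: "ptrace_dual P 0 0 = rho_a \<beta> 0 0" using cd(2) by simp
  have d2: "ptrace_H P 0 0 = transp (rho_a \<alpha>) 0 0" using cd(3) by simp
  have e1: "P 0 0 * 2 + P 1 1 * 2 = 1 + of_real \<beta>"
    using d1 by (simp add: ptrace_dual_def sum2 rho_a_def id2_def sigma_z_def)
  have e2: "P 0 0 * 2 + P 2 2 * 2 = 1 + of_real \<alpha>"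
    using d2 by (simp add: ptrace_H_def sum2 rho_a_def id2_def sigma_z_def transp_def)
  have n1: "0 \<le> P 1 1" by (rule diag_nonneg[OF cd(1)]) simp
  have n2: "0 \<le> P 2 2" by (rule diag_nonneg[OF cd(1)]) simp
  have g1: "Re (P 1 1) \<ge> 0" using n1 by (simp add: less_eq_complex_def)
  have g2: "Re (P 2 2) \<ge> 0" using n2 by (simp add: less_eq_complex_def)
  have ab: "\<bar>\<alpha> - \<beta>\<bar> \<le> 2 * (Re (P 1 1) + Re (P 2 2))"
    by (rule abs_bound[OF re_eq2[OF e1] re_eq2[OF e2] g1 g2])
  have pos: "(0::real) \<le> 2 powr (p - 1)" by simp
  have "2 powr (p - 1) * \<bar>\<alpha> - \<beta>\<bar> \<le> 2 powr (p - 1) * (2 * (Re (P 1 1) + Re (P 2 2)))"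
    by (rule mult_left_mono[OF ab pos])
  also have "\<dots> = 2 powr p * (Re (P 1 1) + Re (P 2 2))"
    by (rule powr_half)
  also have "\<dots> = Re (mtrace 4 (mmult 4 P (Czp p)))"
    unfolding trace_C by simp
  finally show ?thesis .
qed

lemma rho_vals:
  "rho_a x 0 0 = of_real ((1 + x)/2)" "rho_a x 1 1 = of_real ((1 - x)/2)"
  "rho_a x (Suc 0) (Suc 0) = of_real ((1 - x)/2)"
  "rho_a x 0 1 = 0" "rho_a x 1 0 = 0" "rho_a x 0 (Suc 0) = 0" "rho_a x (Suc 0) 0 = 0"
  by (simp_all add: rho_a_def id2_def sigma_z_def field_simps)

lemma obtain_d:
  assumes "-1 \<le> \<alpha>" "\<alpha> \<le> 1" "-1 \<le> \<beta>" "\<beta> \<le> 1"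
  shows "\<exists>d0 d1 d2 d3::real. d0 \<ge> 0 \<and> d1 \<ge> 0 \<and> d2 \<ge> 0 \<and> d3 \<ge> 0 \<and>
     d0 + d1 = (1 + \<beta>)/2 \<and> d2 + d3 = (1 - \<beta>)/2 \<and> d0 + d2 = (1 + \<alpha>)/2 \<and>
     d1 + d3 = (1 - \<alpha>)/2 \<and> d1 + d2 = \<bar>\<alpha> - \<beta>\<bar>/2"
proof (cases "\<alpha> \<le> \<beta>")
  case True
  have "\<bar>\<alpha> - \<beta>\<bar> = \<beta> - \<alpha>" using True by simp
  note h = this
  show ?thesis
    apply (rule exI[of _ "(1+\<alpha>)/2"], rule exI[of _ "(\<beta>-\<alpha>)/2"], rule exI[of _ 0],
        rule exI[of _ "(1-\<beta>)/2"], intro conjI)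
    by (use assms h True in \<open>simp add: field_simps\<close>)+
next
  case False
  have "\<bar>\<alpha> - \<beta>\<bar> = \<alpha> - \<beta>" using False by simp
  note h = this
  show ?thesis
    apply (rule exI[of _ "(1+\<beta>)/2"], rule exI[of _ 0], rule exI[of _ "(\<alpha>-\<beta>)/2"],
        rule exI[of _ "(1-\<alpha>)/2"], intro conjI)
    by (use assms h False in \<open>simp add: field_simps\<close>)+
qed

lemma attained:
  assumes "-1 \<le> \<alpha>" "\<alpha> \<le> 1" "-1 \<le> \<beta>" "\<beta> \<le> 1"
  shows "\<exists>P \<in> couplings (rho_a \<alpha>) (rho_a \<beta>).
           Re (mtrace 4 (mmult 4 P (Czp p))) = 2 powr (p - 1) * \<bar>\<alpha> - \<beta>\<bar>"
proof -
  obtain d0 d1 d2 d3 :: real where D: "d0 \<ge> 0" "d1 \<ge> 0" "d2 \<ge> 0" "d3 \<ge> 0"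
     "d0 + d1 = (1 + \<beta>)/2" "d2 + d3 = (1 - \<beta>)/2" "d0 + d2 = (1 + \<alpha>)/2"
     "d1 + d3 = (1 - \<alpha>)/2" "d1 + d2 = \<bar>\<alpha> - \<beta>\<bar>/2"
    using obtain_d[OF assms] by blast
  define d :: "nat \<Rightarrow> real" where
    "d = (\<lambda>a. if a = 0 then d0 else if a = 1 then d1
              else if a = 2 then d2 else if a = 3 then d3 else 0)"
  have dv: "d 0 = d0" "d 1 = d1" "d (Suc 0) = d1" "d 2 = d2" "d 3 = d3" by (simp_all add: d_def)
  define P :: cmat where "P = (\<lambda>a b. if a = b then of_real (d a) else 0)"
  have dn: "d a \<ge> 0" for a using D by (auto simp: d_def)
  have st: "is_state 4 P"
    unfolding is_state_def
  proof (intro conjI allI impI)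
    fix i j show "P j i = cnj (P i j)" by (simp add: P_def)
  next
    fix v :: "nat \<Rightarrow> complex"
    have "(\<Sum>j<4. cnj (v i) * P i j * v j) = of_real (d i) * of_real ((cmod (v i))^2)" if "i < 4" for i
    proof -
      have "(\<Sum>j<4. cnj (v i) * P i j * v j) = cnj (v i) * of_real (d i) * v i"
      proof -
        have "i = 0 \<or> i = 1 \<or> i = 2 \<or> i = 3" using that by auto
        then show ?thesis by (elim disjE) (simp_all add: sum4 P_def)
      qed
      also have "\<dots> = of_real (d i) * (v i * cnj (v i))" by (simp add: algebra_simps)
      also have "\<dots> = of_real (d i) * of_real ((cmod (v i))^2)" by (simp only: complex_mult_cnj cmod_power2)
      finally show ?thesis .
    qed
    hence "(\<Sum>i<4. \<Sum>j<4. cnj (v i) * P i j * v j) = (\<Sum>i<4. of_real (d i) * of_real ((cmod (v i))^2))"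
      by (intro sum.cong) auto
    also have "\<dots> = of_real (\<Sum>i<4. d i * (cmod (v i))^2)" by simp
    also have "\<dots> \<ge> 0"
    proof -
      have "0 \<le> (\<Sum>i<4. d i * (cmod (v i))^2)" using dn by (intro sum_nonneg) auto
      thus ?thesis unfolding less_eq_complex_def by simp
    qed
    finally show "0 \<le> (\<Sum>i<4. \<Sum>j<4. cnj (v i) * P i j * v j)" .
  next
    have "mtrace 4 P = of_real (d0 + d1 + d2 + d3)"
      by (simp add: mtrace_def sum4 P_def dv)
    also have "d0 + d1 + d2 + d3 = 1"
    proof -
      have "d0 + d1 + d2 + d3 = (d0 + d1) + (d2 + d3)" by simp
      also have "\<dots> = 1" using D(5,6) by (simp add: field_simps)
      finally show ?thesis .
    qed
    finally show "mtrace 4 P = 1" by simp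
  qed
  have pd: "ptrace_dual P 0 0 = of_real (d0 + d1)" "ptrace_dual P (Suc 0) (Suc 0) = of_real (d2 + d3)"
    "ptrace_dual P 0 (Suc 0) = 0" "ptrace_dual P (Suc 0) 0 = 0"
    "ptrace_H P 0 0 = of_real (d0 + d2)" "ptrace_H P (Suc 0) (Suc 0) = of_real (d1 + d3)"
    "ptrace_H P 0 (Suc 0) = 0" "ptrace_H P (Suc 0) 0 = 0"
    by (simp_all add: ptrace_dual_def ptrace_H_def sum2 P_def d_def)
  have c: "P \<in> couplings (rho_a \<alpha>) (rho_a \<beta>)"
    unfolding couplings_def
  proof (intro CollectI conjI allI impI st)
    fix i k :: nat assume "i < 2" "k < 2"
    then have "i = 0 \<or> i = Suc 0" "k = 0 \<or> k = Suc 0" by auto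
    then show "ptrace_dual P i k = rho_a \<beta> i k"
      by (elim disjE) (simp_all only: pd D(5,6) rho_vals)
  next
    fix i k :: nat assume "i < 2" "k < 2"
    then have "i = 0 \<or> i = Suc 0" "k = 0 \<or> k = Suc 0" by auto
    then show "ptrace_H P i k = transp (rho_a \<alpha>) i k"
      by (elim disjE) (simp_all only: pd D(7,8) rho_vals transp_def)
  qed
  have "Re (mtrace 4 (mmult 4 P (Czp p))) = 2 powr p * (d1 + d2)"
    by (simp add: trace_C P_def dv)
  also have "\<dots> = 2 powr (p - 1) * \<bar>\<alpha> - \<beta>\<bar>"
    using D(9) by (simp add: powr_diff)
  finally have "Re (mtrace 4 (mmult 4 P (Czp p))) = 2 powr (p - 1) * \<bar>\<alpha> - \<beta>\<bar>" .
  then show ?thesis by (rule bexI[OF _ c])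
qed

theorem proposition3p9:
  fixes \<alpha> \<beta> p :: real
  assumes "-1 \<le> \<alpha>" "\<alpha> \<le> 1" "-1 \<le> \<beta>" "\<beta> \<le> 1" "1 \<le> p"
  shows "(Dzp p (rho_a \<alpha>) (rho_a \<beta>)) powr p = 2 powr (p - 1) * \<bar>\<alpha> - \<beta>\<bar>"
proof -
  define m where "m = 2 powr (p - 1) * \<bar>\<alpha> - \<beta>\<bar>"
  define C where "C = couplings (rho_a \<alpha>) (rho_a \<beta>)"
  define f where "f = (\<lambda>P. Re (mtrace 4 (mmult 4 P (Czp p))))"
  obtain P where P: "P \<in> C" "f P = m"
    using attained[OF assms(1-4), of p] unfolding C_def f_def m_def by blast
  have low: "m \<le> f Q" if "Q \<in> C" for Q
    using lower[of Q \<alpha> \<beta> p] that unfolding C_def f_def m_def by blast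
  have bdd: "bdd_below (f ` C)"
    by (rule bdd_belowI2[where m = m]) (rule low)
  have I: "(INF Q \<in> C. f Q) = m"
  proof (rule antisym)
    show "(INF Q \<in> C. f Q) \<le> m"
      using cINF_lower[OF bdd P(1)] P(2) by simp
    have "C \<noteq> {}" using P(1) by blast
    then show "m \<le> (INF Q \<in> C. f Q)"
      by (rule cINF_greatest) (rule low)
  qed
  have D: "Dzp p (rho_a \<alpha>) (rho_a \<beta>) = m powr (1/p)"
    unfolding Dzp_def using I unfolding C_def f_def by simp
  have m0: "m \<ge> 0" unfolding m_def by simp
  have "(m powr (1/p)) powr p = m powr (1/p * p)" by (rule powr_powr)
  also have "1/p * p = 1" using assms(5) by simp
  also have "m powr 1 = m" using m0 by simp
  finally show ?thesis using D unfolding m_def by simp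
qed

end
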